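(* Let $\bm\mu^N\in\mathcal P(\mathcal X^N)$, $N\in\mathbb N$, and $\mathbb M\in\mathcal P(\mathcal P(\mathcal X))$ be such that $L^N_\#\bm\mu^N\rightharpoonup\mathbb M$ weakly as $N\to\infty$. Then $$\liminf_{N\to\infty}\frac1N\mathcal H(\bm\mu^N\mid\bm\pi^N)\ge\int_{\mathcal P(\mathcal X)}(\mathcal F(\nu)-\mathcal F_0)\,\mathbb M(d\nu)=\mathbb F(\mathbb M)-\mathcal F_0,\qquad \mathcal F_0:=\inf_{\mu\in\mathcal P(\mathcal X)}\mathcal F(\mu).$$
   Context: $\mathcal X=\{1,\dots,d\}$ finite, $\mathcal P(\mathcal X)\subset\mathbb R^{\mathcal X}$. $K:\mathcal P(\mathcal X)\times\mathcal X\to\mathbb R$ with each $K_x$ twice continuously differentiable on a neighbourhood of $\mathcal P(\mathcal X)$; $U(\mu)=\sum_x\mu_xK_x(\mu)$; $\mathcal F(\mu)=\sum_x\mu_x\log\mu_x+U(\mu)$ (with $0\log0=0$); $\mathbb F(\mathbb M)=\int\mathcal F\,d\mathbb M$. For $\bm x\in\mathcal X^N$, $L^N(\bm x)=\frac1N\sum_{i=1}^N\delta_{x_i}\in\mathcal P(\mathcal X)$, and $L^N_\#\bm\mu$ is the push-forward of $\bm\mu\in\mathcal P(\mathcal X^N)$. $\bm\pi^N_{\bm x}=\exp(-NU(L^N\bm x))/\bm Z^N$ with $\bm Z^N=\sum_{\bm x}\exp(-NU(L^N\bm x))$. $\mathcal H(\bm\mu\mid\bm\pi)=\sum_{\bm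 x}\bm\mu_{\bm x}\log(\bm\mu_{\bm x}/\bm\pi_{\bm x})$. *)

theory Defs
  imports "HOL-Analysis.Analysis" "HOL-Probability.Probability"
begin

text \<open>The finite state space is a finite type 'x; probability vectors live in real^'x.\<close>

definition probvecs :: "(real^'x::finite) set" where
  "probvecs = {v. (\<forall>i. 0 \<le> v $ i) \<and> (\<Sum>i\<in>UNIV. v $ i) = 1}"

definition configs :: "nat \<Rightarrow> (nat \<Rightarrow> 'x::finite) set" where
  "configs N = PiE {..<N} (\<lambda>_. UNIV)"

definition prob_on_configs :: "nat \<Rightarrow> ((nat \<Rightarrow> 'x::finite) \<Rightarrow> real) \<Rightarrow> bool" where
  "prob_on_configs N m \<longleftrightarrow> (\<forall>x\<in>configs N. 0 \<le> m x) \<and> (\<Sum>x\<in>configs N. m x) = 1"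

definition empirical :: "nat \<Rightarrow> (nat \<Rightarrow> 'x::finite) \<Rightarrow> real^'x" where
  "empirical N x = (\<chi> y. real (card {i\<in>{..<N}. x i = y}) / real N)"

definition xlogx :: "real \<Rightarrow> real" where
  "xlogx t = (if t = 0 then 0 else t * ln t)"

definition C2_on :: "(real^'x::finite) set \<Rightarrow> (real^'x \<Rightarrow> real) \<Rightarrow> bool" where
  "C2_on A f \<longleftrightarrow> (\<exists>D1 D2. (\<forall>v\<in>A. (f has_derivative blinfun_apply (D1 v)) (at v)) \<and>
     (\<forall>v\<in>A. (D1 has_derivative blinfun_apply (D2 v)) (at v)) \<and> continuous_on A D2)"

definition Uen :: "(real^'x::finite \<Rightarrow> 'x \<Rightarrow> real) \<Rightarrow> real^'x \<Rightarrow> real" where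
  "Uen K v = (\<Sum>x\<in>UNIV. v $ x * K v x)"

definition Fen :: "(real^'x::finite \<Rightarrow> 'x \<Rightarrow> real) \<Rightarrow> real^'x \<Rightarrow> real" where
  "Fen K v = (\<Sum>x\<in>UNIV. xlogx (v $ x)) + Uen K v"

definition F0 :: "(real^'x::finite \<Rightarrow> 'x \<Rightarrow> real) \<Rightarrow> real" where
  "F0 K = (INF v\<in>probvecs. Fen K v)"

definition FFen :: "(real^'x::finite \<Rightarrow> 'x \<Rightarrow> real) \<Rightarrow> (real^'x) measure \<Rightarrow> real" where
  "FFen K M = (LINT v:probvecs|M. Fen K v)"

definition ZN :: "(real^'x::finite \<Rightarrow> 'x \<Rightarrow> real) \<Rightarrow> nat \<Rightarrow> real" where
  "ZN K N = (\<Sum>x\<in>configs N. exp (- real N * Uen K (empirical N x)))"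

definition piN :: "(real^'x::finite \<Rightarrow> 'x \<Rightarrow> real) \<Rightarrow> nat \<Rightarrow> (nat \<Rightarrow> 'x) \<Rightarrow> real" where
  "piN K N x = exp (- real N * Uen K (empirical N x)) / ZN K N"

definition relent :: "nat \<Rightarrow> ((nat \<Rightarrow> 'x::finite) \<Rightarrow> real) \<Rightarrow> ((nat \<Rightarrow> 'x) \<Rightarrow> real) \<Rightarrow> real" where
  "relent N m p = (\<Sum>x\<in>configs N. (if m x = 0 then 0 else m x * ln (m x / p x)))"

text \<open>Weak convergence of the push-forwards L^N_# mu^N to a measure M on real^'x
  (tested against bounded continuous functions).\<close>
definition pushforward_weak_conv ::
  "(nat \<Rightarrow> (nat \<Rightarrow> 'x::finite) \<Rightarrow> real) \<Rightarrow> (real^'x) measure \<Rightarrow> bool" where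
  "pushforward_weak_conv mu M \<longleftrightarrow>
     (\<forall>f :: real^'x \<Rightarrow> real. continuous_on UNIV f \<and> bounded (range f) \<longrightarrow>
        (\<lambda>N. \<Sum>x\<in>configs N. mu N x * f (empirical N x)) \<longlonglongrightarrow> integral\<^sup>L M f)"

end

theory Submission
  imports Defs "HOL-Real_Asymp.Real_Asymp"
begin


lemma gibbs:
  fixes p q :: "'a \<Rightarrow> real"
  assumes "finite I" "\<forall>x\<in>I. 0 \<le> p x" "sum p I = 1" "\<forall>x\<in>I. 0 \<le> q x" "sum q I \<le> 1"
    "\<forall>x\<in>I. p x > 0 \<longrightarrow> q x > 0"
  shows "0 \<le> (\<Sum>x\<in>I. if p x = 0 then 0 else p x * ln (p x / q x))"
proof -
  have "\<forall>x\<in>I. p x - q x \<le> (if p x = 0 then 0 else p x * ln (p x / q x))"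
  proof
    fix x assume x: "x \<in> I"
    show "p x - q x \<le> (if p x = 0 then 0 else p x * ln (p x / q x))"
    proof (cases "p x = 0")
      case True thus ?thesis using assms x by auto
    next
      case False
      hence pp: "p x > 0" using assms x by force
      hence qp: "q x > 0" using assms x by auto
      have "ln (q x / p x) \<le> q x / p x - 1" using pp qp by (intro ln_le_minus_one) auto
      hence "p x * ln (q x / p x) \<le> p x * (q x / p x - 1)" using pp by (intro mult_left_mono) auto
      also have "\<dots> = q x - p x" using pp by (simp add: field_simps)
      finally have "p x * ln (q x / p x) \<le> q x - p x" .
      moreover have "ln (p x / q x) = - ln (q x / p x)" using pp qp by (simp add: ln_div)
      ultimately show ?thesis using False by simp
    qed
  qed
  hence "(\<Sum>x\<in>I. p x - q x) \<le> (\<Sum>x\<in>I. if p x = 0 then 0 else p x * ln (p x / q x))"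
    by (intro sum_mono) auto
  moreover have "(\<Sum>x\<in>I. p x - q x) \<ge> 0" using assms by (simp add: sum_subtractf)
  ultimately show ?thesis by linarith
qed

lemma configs_finite: "finite (configs N :: (nat \<Rightarrow> 'x::finite) set)"
  unfolding configs_def by (intro finite_PiE) auto

lemma configs_ne: "(configs N :: (nat \<Rightarrow> 'x::finite) set) \<noteq> {}"
  unfolding configs_def by (simp add: PiE_eq_empty_iff)

lemma prod_sum_configs:
  fixes w :: "nat \<Rightarrow> 'x::finite \<Rightarrow> real"
  shows "(\<Sum>x\<in>configs N. \<Prod>i<N. w i (x i)) = (\<Prod>i<N. \<Sum>s\<in>UNIV. w i s)"
  unfolding configs_def by (subst prod_sum_PiE) auto

definition cnt :: "nat \<Rightarrow> (nat \<Rightarrow> 'x) \<Rightarrow> 'x \<Rightarrow> nat" where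
  "cnt N x y = card {i\<in>{..<N}. x i = y}"

lemma cnt_sum_eq: "(\<Sum>i<N. h (x i)) = (\<Sum>y\<in>UNIV. real (cnt N x y) * h y)"
  for h :: "'x::finite \<Rightarrow> real"
proof -
  have "(\<Sum>i<N. h (x i)) = (\<Sum>i<N. \<Sum>y\<in>UNIV. (if x i = y then h y else 0))"
    by (simp add: sum.delta)
  also have "\<dots> = (\<Sum>y\<in>UNIV. \<Sum>i<N. (if x i = y then h y else 0))" by (rule sum.swap)
  also have "\<dots> = (\<Sum>y\<in>UNIV. real (cnt N x y) * h y)"
    unfolding cnt_def by (simp add: sum.If_cases Int_def)
  finally show ?thesis .
qed

lemma cnt_sum: "(\<Sum>y\<in>UNIV. real (cnt N x y)) = real N" for x :: "nat \<Rightarrow> 'x::finite"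
  using cnt_sum_eq[where h="\<lambda>_. 1" and N=N and x=x] by simp

lemma cnt_le: "cnt N x y \<le> N"
  unfolding cnt_def by (rule order.trans[OF card_mono[of "{..<N}"]]) auto

lemma cnt_pos: "i < N \<Longrightarrow> cnt N x (x i) \<ge> 1"
proof -
  assume i: "i < N"
  have "card {j\<in>{..<N}. x j = x i} > 0" using i by (subst card_gt_0_iff) auto
  thus ?thesis unfolding cnt_def by linarith
qed

lemma empirical_cnt: "empirical N x $ y = real (cnt N x y) / real N"
  unfolding empirical_def cnt_def by simp

lemma empirical_probvec: "N \<ge> 1 \<Longrightarrow> empirical N x \<in> probvecs"
  unfolding probvecs_def using cnt_sum[of N x]
  by (auto simp: empirical_cnt sum_divide_distrib[symmetric])

definition Sent :: "real^'x::finite \<Rightarrow> real" where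
  "Sent v = (\<Sum>y\<in>UNIV. xlogx (v $ y))"

definition Kset :: "nat \<Rightarrow> ('x::finite \<Rightarrow> nat) set" where
  "Kset N = {k \<in> PiE (UNIV::'x set) (\<lambda>_. {..N}). sum k UNIV = N}"

definition qq :: "nat \<Rightarrow> (nat \<Rightarrow> 'x::finite) \<Rightarrow> real" where
  "qq N x = (\<Sum>k\<in>(Kset N::('x \<Rightarrow> nat) set). \<Prod>i<N. real (k (x i)) / real N) / real (N+1)^CARD('x)"

lemma Kset_finite: "finite (Kset N)"
  unfolding Kset_def by (rule finite_subset[of _ "PiE UNIV (\<lambda>_. {..N})"]) (auto intro: finite_PiE)

lemma Kset_card: "card (Kset N :: ('x::finite \<Rightarrow> nat) set) \<le> (N+1)^CARD('x)"
proof -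
  have "card (Kset N :: ('x \<Rightarrow> nat) set) \<le> card (PiE (UNIV::'x set) (\<lambda>_. {..N}))"
    unfolding Kset_def by (rule card_mono) (auto intro: finite_PiE)
  also have "\<dots> = (N+1)^CARD('x)" by (simp add: card_PiE)
  finally show ?thesis .
qed

lemma qq_nonneg: "0 \<le> qq N x"
  unfolding qq_def by (intro divide_nonneg_pos sum_nonneg prod_nonneg) auto

lemma qq_sum: assumes "N \<ge> 1" shows "(\<Sum>x\<in>(configs N :: (nat \<Rightarrow> 'x::finite) set). qq N x) \<le> 1"
proof -
  have "(\<Sum>x\<in>(configs N :: (nat \<Rightarrow> 'x) set). qq N x) = (\<Sum>k\<in>(Kset N::('x \<Rightarrow> nat) set). \<Sum>x\<in>configs N. \<Prod>i<N. real (k (x i)) / real N) / real (N+1)^CARD('x)"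
    unfolding qq_def by (simp add: sum_divide_distrib[symmetric] sum.swap[of _ "configs N"])
  also have "\<dots> = (\<Sum>k\<in>(Kset N::('x \<Rightarrow> nat) set). 1) / real (N+1)^CARD('x)"
  proof -
    have "(\<Sum>x\<in>configs N. \<Prod>i<N. real (k (x i)) / real N) = 1" if k: "k \<in> Kset N" for k :: "'x \<Rightarrow> nat"
    proof -
      have "(\<Sum>x\<in>configs N. \<Prod>i<N. real (k (x i)) / real N) = (\<Prod>i<N. \<Sum>s\<in>UNIV. real (k s) / real N)"
        by (rule prod_sum_configs)
      also have "(\<Sum>s\<in>UNIV. real (k s) / real N) = 1"
        using k assms unfolding Kset_def by (simp add: sum_divide_distrib[symmetric] of_nat_sum[symmetric])
      finally show ?thesis by simp
    qed
    thus ?thesis by (intro arg_cong2[where f="(/)"] sum.cong) auto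
  qed
  also have "\<dots> \<le> 1" using Kset_card[where N=N and 'x='x]
    by (simp add: divide_le_eq_1) (metis of_nat_le_iff of_nat_power of_nat_Suc add.commute Suc_eq_plus1)
  finally show ?thesis .
qed

lemma qq_low:
  fixes x :: "nat \<Rightarrow> 'x::finite"
  assumes N: "N \<ge> 1"
  shows "qq N x > 0 \<and> ln (qq N x) \<ge> real N * Sent (empirical N x) - real CARD('x) * ln (real N + 1)"
proof -
  define cv where "cv = (\<lambda>y. cnt N x y)"
  have cvK: "cv \<in> Kset N"
  proof -
    have "real (sum cv UNIV) = real N" using cnt_sum[of N x] by (simp add: cv_def)
    hence "sum cv UNIV = N" by linarith
    thus ?thesis unfolding Kset_def cv_def using cnt_le[of N x] by (auto simp: PiE_iff)
  qed
  define P0 where "P0 = (\<Prod>i<N. real (cv (x i)) / real N)"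
  have cpos: "real (cnt N x (x i)) > 0" if "i < N" for i
    using cnt_pos[of i N x] that by simp
  have P0pos: "P0 > 0" unfolding P0_def cv_def using cpos N
    by (intro prod_pos) (auto intro!: divide_pos_pos)
  have "P0 \<le> (\<Sum>k\<in>(Kset N::('x \<Rightarrow> nat) set). \<Prod>i<N. real (k (x i)) / real N)"
    unfolding P0_def using cvK Kset_finite
    by (intro member_le_sum[where f="\<lambda>k. \<Prod>i<N. real (k (x i)) / real N"]) (auto intro!: prod_nonneg)
  hence le: "P0 / real (N+1)^CARD('x) \<le> qq N x" unfolding qq_def by (intro divide_right_mono) auto
  have pos2: "P0 / real (N+1)^CARD('x) > 0" using P0pos by auto
  have lnP0: "ln P0 = real N * Sent (empirical N x)"
  proof -
    have "ln P0 = (\<Sum>i<N. ln (real (cv (x i)) / real N))" unfolding P0_def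
      using cpos N by (subst ln_prod) (auto simp: cv_def)
    also have "\<dots> = (\<Sum>y\<in>UNIV. real (cnt N x y) * ln (real (cv y) / real N))"
      by (rule cnt_sum_eq)
    also have "\<dots> = (\<Sum>y\<in>UNIV. real N * xlogx (empirical N x $ y))"
      using N by (intro sum.cong) (auto simp: xlogx_def empirical_cnt cv_def)
    finally show ?thesis by (simp add: Sent_def sum_distrib_left)
  qed
  have "ln (P0 / real (N+1)^CARD('x)) = ln P0 - real CARD('x) * ln (real N + 1)"
    using P0pos by (simp add: ln_div ln_realpow add.commute)
  moreover have "ln (P0 / real (N+1)^CARD('x)) \<le> ln (qq N x)" using le pos2 by simp
  ultimately show ?thesis using le pos2 lnP0 by linarith
qed

definition pprod :: "real^'x::finite \<Rightarrow> nat \<Rightarrow> (nat \<Rightarrow> 'x) \<Rightarrow> real" where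
  "pprod v N x = (\<Prod>i<N. v $ (x i))"

lemma probvecsD: "v \<in> probvecs \<Longrightarrow> 0 \<le> v $ i" "v \<in> probvecs \<Longrightarrow> (\<Sum>i\<in>UNIV. v $ i) = 1"
  unfolding probvecs_def by auto

lemma E_gen:
  fixes v :: "real^'x::finite"
  shows "(\<Sum>x\<in>configs N. pprod v N x * (\<Prod>i<N. w i (x i))) = (\<Prod>i<N. \<Sum>s\<in>UNIV. v $ s * w i s)"
  unfolding pprod_def by (subst prod.distrib[symmetric]) (rule prod_sum_configs)

lemma p_sum: "v \<in> probvecs \<Longrightarrow> (\<Sum>x\<in>configs N. pprod v N x) = 1"
  using E_gen[of v N "\<lambda>_ _. 1"] by (simp add: probvecsD)

lemma p_nonneg: "v \<in> probvecs \<Longrightarrow> 0 \<le> pprod v N x"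
  unfolding pprod_def by (intro prod_nonneg) (auto simp: probvecsD)

lemma E_single:
  assumes "v \<in> probvecs" "k < N"
  shows "(\<Sum>x\<in>configs N. pprod v N x * f (x k)) = (\<Sum>s\<in>UNIV. v $ s * f s)"
proof -
  have "(\<Sum>x\<in>configs N. pprod v N x * f (x k)) =
        (\<Sum>x\<in>configs N. pprod v N x * (\<Prod>i<N. (if i = k then f (x i) else 1)))"
    using assms by (simp add: prod.delta)
  also have "\<dots> = (\<Prod>i<N. \<Sum>s\<in>UNIV. v $ s * (if i = k then f s else 1))"
    by (rule E_gen[where w="\<lambda>i s. if i = k then f s else 1"])
  also have "\<dots> = (\<Prod>i<N. if i = k then (\<Sum>s\<in>UNIV. v $ s * f s) else 1)"
    using assms by (intro prod.cong) (auto simp: probvecsD)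
  also have "\<dots> = (\<Sum>s\<in>UNIV. v $ s * f s)" using assms by (simp add: prod.delta)
  finally show ?thesis .
qed

lemma E_pair:
  assumes "v \<in> probvecs" "a < N" "b < N" "a \<noteq> b"
  shows "(\<Sum>x\<in>configs N. pprod v N x * (f (x a) * g (x b))) = (\<Sum>s\<in>UNIV. v $ s * f s) * (\<Sum>s\<in>UNIV. v $ s * g s)"
proof -
  have "(\<Sum>x\<in>configs N. pprod v N x * (f (x a) * g (x b))) =
        (\<Sum>x\<in>configs N. pprod v N x * (\<Prod>i<N. (if i = a then f (x i) else 1) * (if i = b then g (x i) else 1)))"
    using assms by (simp add: prod.distrib prod.delta)
  also have "\<dots> = (\<Prod>i<N. \<Sum>s\<in>UNIV. v $ s * ((if i = a then f s else 1) * (if i = b then g s else 1)))"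
    by (rule E_gen[where w="\<lambda>i s. (if i = a then f s else 1) * (if i = b then g s else 1)"])
  also have "\<dots> = (\<Prod>i<N. (if i = a then (\<Sum>s\<in>UNIV. v $ s * f s) else 1) * (if i = b then (\<Sum>s\<in>UNIV. v $ s * g s) else 1))"
    using assms by (intro prod.cong) (auto simp: probvecsD)
  also have "\<dots> = (\<Sum>s\<in>UNIV. v $ s * f s) * (\<Sum>s\<in>UNIV. v $ s * g s)" using assms by (simp add: prod.distrib prod.delta)
  finally show ?thesis .
qed

lemma p_entropy:
  assumes v: "v \<in> probvecs"
  shows "(\<Sum>x\<in>configs N. xlogx (pprod v N x)) = real N * Sent v"
proof -
  define h where "h s = (if v $ s = 0 then 0 else ln (v $ s))" for s
  have "xlogx (pprod v N x) = pprod v N x * (\<Sum>i<N. h (x i))" for x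
  proof (cases "pprod v N x = 0")
    case True thus ?thesis by (simp add: xlogx_def)
  next
    case False
    hence nz: "\<forall>i<N. v $ (x i) \<noteq> 0" unfolding pprod_def by auto
    hence pos: "\<forall>i<N. v $ (x i) > 0" using probvecsD(1)[OF v] by (auto simp: less_le)
    have "ln (pprod v N x) = (\<Sum>i<N. ln (v $ (x i)))" unfolding pprod_def
      using pos by (subst ln_prod) auto
    also have "\<dots> = (\<Sum>i<N. h (x i))" using nz by (intro sum.cong) (auto simp: h_def)
    finally show ?thesis using False by (simp add: xlogx_def)
  qed
  hence "(\<Sum>x\<in>configs N. xlogx (pprod v N x)) = (\<Sum>x\<in>configs N. \<Sum>i<N. pprod v N x * h (x i))"
    by (simp add: sum_distrib_left)
  also have "\<dots> = (\<Sum>i<N. \<Sum>x\<in>configs N. pprod v N x * h (x i))" by (rule sum.swap)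
  also have "\<dots> = (\<Sum>i<N. \<Sum>s\<in>UNIV. v $ s * h s)" using E_single[OF v] by (intro sum.cong) auto
  also have "\<dots> = real N * Sent v" unfolding Sent_def
    by (simp add: h_def xlogx_def if_distrib cong: if_cong)
  finally show ?thesis .
qed

lemma second_moment:
  assumes v: "v \<in> probvecs" and N: "N \<ge> 1"
  shows "(\<Sum>x\<in>configs N. pprod v N x * (empirical N x $ y - v $ y)^2) \<le> 1 / real N"
proof -
  define b where "b s = (if s = y then 1 else 0) - v $ y" for s
  have Lb: "empirical N x $ y - v $ y = (\<Sum>i<N. b (x i)) / real N" for x
  proof -
    have "(\<Sum>i<N. b (x i)) = (\<Sum>z\<in>UNIV. real (cnt N x z) * b z)" by (rule cnt_sum_eq)
    also have "\<dots> = (\<Sum>z\<in>UNIV. (if z = y then real (cnt N x z) else 0)) - (\<Sum>z\<in>UNIV. real (cnt N x z)) * v $ y"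
    proof -
      have "real (cnt N x z) * b z = (if z = y then real (cnt N x z) else 0) - real (cnt N x z) * v $ y" for z
        unfolding b_def by (simp add: algebra_simps)
      thus ?thesis by (simp add: sum_subtractf sum_distrib_right)
    qed
    also have "\<dots> = real (cnt N x y) - v $ y * (\<Sum>z\<in>UNIV. real (cnt N x z))"
      by simp
    also have "\<dots> = real (cnt N x y) - v $ y * real N" by (simp add: cnt_sum)
    finally show ?thesis using N by (simp add: empirical_cnt field_simps)
  qed
  have sq: "(empirical N x $ y - v $ y)^2 = (\<Sum>i<N. \<Sum>j<N. b (x i) * b (x j)) / (real N)^2" for x
    unfolding Lb by (simp add: power_divide power2_eq_square sum_product)
  have "(\<Sum>x\<in>configs N. pprod v N x * (empirical N x $ y - v $ y)^2) =
        (\<Sum>i<N. \<Sum>j<N. \<Sum>x\<in>configs N. pprod v N x * (b (x i) * b (x j))) / (real N)^2"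
    unfolding sq by (simp add: sum_divide_distrib[symmetric] sum_distrib_left sum.swap[of _ "configs N"])
  also have "\<dots> \<le> (\<Sum>i<N. \<Sum>j<N. (if i = j then 1 else 0)) / (real N)^2"
  proof (intro divide_right_mono sum_mono)
    fix i j assume i: "i \<in> {..<N}" and j: "j \<in> {..<N}"
    have bb: "b s * b s \<le> 1" "0 \<le> b s * b s" for s
      using probvecsD(1)[OF v, of y] probvecs_def v
    proof -
      have "0 \<le> v $ y" "v $ y \<le> 1"
        using probvecsD[OF v] member_le_sum[of y UNIV "\<lambda>i. v $ i"] by auto
      thus "b s * b s \<le> 1" "0 \<le> b s * b s" unfolding b_def by (auto intro: mult_le_one)
    qed
    show "(\<Sum>x\<in>configs N. pprod v N x * (b (x i) * b (x j))) \<le> (if i = j then 1 else 0)"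
    proof (cases "i = j")
      case True
      have "(\<Sum>x\<in>configs N. pprod v N x * (b (x i) * b (x j))) = (\<Sum>s\<in>UNIV. v $ s * (b s * b s))"
        using E_single[OF v, of i N "\<lambda>s. b s * b s"] i True by simp
      also have "\<dots> \<le> (\<Sum>s\<in>UNIV. v $ s)"
        using bb probvecsD(1)[OF v] by (intro sum_mono) (simp add: mult_left_le)
      finally show ?thesis using True probvecsD(2)[OF v] by simp
    next
      case False
      have "v $ s * b s = (if s = y then v $ s else 0) - v $ s * v $ y" for s
        unfolding b_def by (simp add: algebra_simps)
      hence "(\<Sum>s\<in>UNIV. v $ s * b s) = v $ y - (\<Sum>s\<in>UNIV. v $ s) * v $ y"
        by (simp add: sum_subtractf sum_distrib_right)
      hence "(\<Sum>s\<in>UNIV. v $ s * b s) = 0" using probvecsD(2)[OF v] by simp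
      thus ?thesis using E_pair[OF v, of i N j b b] i j False by simp
    qed
  qed simp
  also have "\<dots> = 1 / real N" using N by (simp add: power2_eq_square)
  finally show ?thesis .
qed



lemma Fen_Sent: "Fen K v = Sent v + Uen K v"
  unfolding Fen_def Sent_def by simp

lemma main_ineq:
  fixes K :: "real^'x::finite \<Rightarrow> 'x \<Rightarrow> real" and m :: "(nat \<Rightarrow> 'x) \<Rightarrow> real"
  assumes N: "N \<ge> 1" and m: "prob_on_configs N m" and v: "v \<in> probvecs"
  shows "relent N m (piN K N) / real N \<ge>
     (\<Sum>x\<in>configs N. m x * Fen K (empirical N x)) - Fen K v - real CARD('x) * ln (real N + 1) / real N
     - ((\<Sum>x\<in>configs N. pprod v N x * Uen K (empirical N x)) - Uen K v)"
proof -
  let ?C = "configs N :: (nat \<Rightarrow> 'x) set"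
  let ?L = "empirical N"
  define Z where "Z = ZN K N"
  define g where "g x = exp (- real N * Uen K (?L x))" for x
  have fin: "finite ?C" by (rule configs_finite)
  have Zpos: "Z > 0" unfolding Z_def ZN_def using fin configs_ne[of N]
    by (intro sum_pos) auto
  have pidef: "piN K N x = g x / Z" for x unfolding piN_def g_def Z_def by simp
  have lnpi: "ln (piN K N x) = - real N * Uen K (?L x) - ln Z" for x
    unfolding pidef using Zpos by (simp add: ln_div g_def)
  have pipos: "piN K N x > 0" for x unfolding pidef using Zpos by (simp add: g_def)
  have m0: "\<forall>x\<in>?C. 0 \<le> m x" and m1: "sum m ?C = 1" using m unfolding prob_on_configs_def by auto
  have G1: "0 \<le> (\<Sum>x\<in>?C. if m x = 0 then 0 else m x * ln (m x / qq N x))"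
    using N qq_low[OF N] qq_nonneg qq_sum[OF N] m0 m1 by (intro gibbs fin) auto
  have split: "(if m x = 0 then 0 else m x * ln (m x / piN K N x)) =
       (if m x = 0 then 0 else m x * ln (m x / qq N x)) + m x * (ln (qq N x) - ln (piN K N x))"
    if "x \<in> ?C" for x
  proof (cases "m x = 0")
    case False
    hence "m x > 0" using m0 that by force
    thus ?thesis using False qq_low[OF N, of x] pipos[of x] by (simp add: ln_div algebra_simps)
  qed simp
  have "relent N m (piN K N) = (\<Sum>x\<in>?C. if m x = 0 then 0 else m x * ln (m x / qq N x))
        + (\<Sum>x\<in>?C. m x * (ln (qq N x) - ln (piN K N x)))"
    unfolding relent_def using split by (simp add: sum.distrib)
  also have "\<dots> \<ge> (\<Sum>x\<in>?C. m x * (real N * Fen K (?L x) - real CARD('x) * ln (real N + 1) + ln Z))"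
  proof -
    have "(\<Sum>x\<in>?C. m x * (real N * Fen K (?L x) - real CARD('x) * ln (real N + 1) + ln Z))
          \<le> (\<Sum>x\<in>?C. m x * (ln (qq N x) - ln (piN K N x)))"
    proof (intro sum_mono mult_left_mono)
      fix x assume "x \<in> ?C"
      show "real N * Fen K (?L x) - real CARD('x) * ln (real N + 1) + ln Z \<le> ln (qq N x) - ln (piN K N x)"
        using qq_low[OF N, of x] unfolding lnpi Fen_Sent by (simp add: algebra_simps)
    qed (use m0 in auto)
    thus ?thesis using G1 by linarith
  qed
  finally have R0: "relent N m (piN K N) \<ge> (\<Sum>x\<in>?C. m x * (real N * Fen K (?L x) - real CARD('x) * ln (real N + 1) + ln Z))" .
  have R1: "relent N m (piN K N) \<ge> real N * (\<Sum>x\<in>?C. m x * Fen K (?L x)) - real CARD('x) * ln (real N + 1) + ln Z"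
  proof -
    have "(\<Sum>x\<in>?C. m x * (real N * Fen K (?L x) - real CARD('x) * ln (real N + 1) + ln Z))
      = real N * (\<Sum>x\<in>?C. m x * Fen K (?L x)) - (\<Sum>x\<in>?C. m x) * (real CARD('x) * ln (real N + 1)) + (\<Sum>x\<in>?C. m x) * ln Z"
      by (simp add: algebra_simps sum.distrib sum_subtractf sum_distrib_left sum_distrib_right)
    thus ?thesis using m1 R0 by simp
  qed
  let ?p = "pprod v N"
  have G2: "0 \<le> (\<Sum>x\<in>?C. if ?p x = 0 then 0 else ?p x * ln (?p x / (g x / Z)))"
  proof (intro gibbs fin)
    show "sum (\<lambda>x. g x / Z) ?C \<le> 1" using Zpos by (simp add: sum_divide_distrib[symmetric] Z_def ZN_def g_def)
  qed (use p_nonneg[OF v] p_sum[OF v] Zpos in \<open>auto simp: g_def\<close>)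
  have eq2: "(if ?p x = 0 then 0 else ?p x * ln (?p x / (g x / Z))) =
       xlogx (?p x) + real N * (?p x * Uen K (?L x)) + ?p x * ln Z" for x
  proof (cases "?p x = 0")
    case False
    hence "?p x > 0" using p_nonneg[OF v, of N x] by linarith
    thus ?thesis using False Zpos by (simp add: xlogx_def ln_div ln_mult g_def algebra_simps)
  qed (simp add: xlogx_def)
  have "0 \<le> (\<Sum>x\<in>?C. xlogx (?p x)) + real N * (\<Sum>x\<in>?C. ?p x * Uen K (?L x)) + (\<Sum>x\<in>?C. ?p x) * ln Z"
    using G2 unfolding eq2 by (simp add: sum.distrib sum_distrib_left sum_distrib_right)
  hence R2: "ln Z \<ge> - real N * Sent v - real N * (\<Sum>x\<in>?C. ?p x * Uen K (?L x))"
    unfolding p_entropy[OF v] p_sum[OF v] by simp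
  have "relent N m (piN K N) \<ge> real N * ((\<Sum>x\<in>?C. m x * Fen K (?L x)) - Fen K v - real CARD('x) * ln (real N + 1) / real N
     - ((\<Sum>x\<in>?C. ?p x * Uen K (?L x)) - Uen K v))"
    using R1 R2 N unfolding Fen_Sent[of K v] by (simp add: algebra_simps)
  thus ?thesis using N by (simp add: field_simps)
qed



lemma probvecs_closed: "closed (probvecs :: (real^'x::finite) set)"
  unfolding probvecs_def
  by (intro closed_Collect_conj closed_Collect_all closed_Collect_le closed_Collect_eq continuous_intros)

lemma probvecs_bounded: "bounded (probvecs :: (real^'x::finite) set)"
  unfolding bounded_iff
proof (intro exI ballI)
  fix v :: "real^'x" assume v: "v \<in> probvecs"
  have "norm v \<le> (\<Sum>i\<in>UNIV. \<bar>v $ i\<bar>)" by (rule norm_le_l1_cart)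
  also have "\<dots> = 1" using probvecsD[OF v] by simp
  finally show "norm v \<le> 1" .
qed

lemma probvecs_compact: "compact (probvecs :: (real^'x::finite) set)"
  using probvecs_closed probvecs_bounded by (simp add: compact_eq_bounded_closed)

lemma probvecs_convex: "convex (probvecs :: (real^'x::finite) set)"
  unfolding convex_def probvecs_def
  by (auto simp: sum.distrib sum_distrib_left[symmetric])

lemma probvecs_ne: "(probvecs :: (real^'x::finite) set) \<noteq> {}"
proof -
  have "(\<chi> i. 1 / real CARD('x)) \<in> (probvecs :: (real^'x) set)"
    unfolding probvecs_def by simp
  thus ?thesis by blast
qed

lemma xlogx_cont: "continuous_on {0..} xlogx"
proof -
  have eq: "xlogx t = t * ln t" for t by (simp add: xlogx_def)
  have "continuous (at t within {0..}) (\<lambda>t::real. t * ln t)" if t: "t \<in> {0..}" for t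
  proof (cases "t = 0")
    case True
    have "((\<lambda>x::real. x * ln x) \<longlongrightarrow> 0) (at_right 0)" by real_asymp
    thus ?thesis using True by (simp add: continuous_within at_within_Ici_at_right)
  next
    case False
    hence "isCont (\<lambda>t::real. t * ln t) t" by (intro continuous_intros) auto
    thus ?thesis by (rule continuous_at_imp_continuous_at_within)
  qed
  thus ?thesis unfolding eq[abs_def] using continuous_on_eq_continuous_within by blast
qed

lemma Sent_cont: "continuous_on probvecs (Sent :: real^'x::finite \<Rightarrow> real)"
  unfolding Sent_def
proof (intro continuous_on_sum)
  fix y :: 'x
  show "continuous_on probvecs (\<lambda>v::real^'x. xlogx (v $ y))"
    by (rule continuous_on_compose2[OF xlogx_cont]) (auto intro: continuous_intros simp: probvecsD)
qed

lemma K_cont: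
  assumes "\<exists>A. open A \<and> probvecs \<subseteq> A \<and> (\<forall>x. C2_on A (\<lambda>v. K v x))"
  shows "continuous_on probvecs (\<lambda>v. K v x)"
proof -
  obtain A where A: "open A" "probvecs \<subseteq> A" "\<forall>x. C2_on A (\<lambda>v. K v x)" using assms by blast
  then obtain D1 D2 where "\<forall>v\<in>A. ((\<lambda>v. K v x) has_derivative blinfun_apply (D1 v)) (at v)"
    unfolding C2_on_def by blast
  hence "\<forall>v\<in>A. isCont (\<lambda>v. K v x) v" using has_derivative_continuous by blast
  hence "continuous_on A (\<lambda>v. K v x)" by (rule continuous_at_imp_continuous_on)
  thus ?thesis using A(2) by (rule continuous_on_subset)
qed

lemma Uen_cont:
  assumes "\<exists>A. open A \<and> probvecs \<subseteq> A \<and> (\<forall>x. C2_on A (\<lambda>v. K v x))"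
  shows "continuous_on probvecs (Uen K)"
  unfolding Uen_def[abs_def] using K_cont[OF assms] by (intro continuous_intros) auto

lemma Fen_cont:
  assumes "\<exists>A. open A \<and> probvecs \<subseteq> A \<and> (\<forall>x. C2_on A (\<lambda>v. K v x))"
  shows "continuous_on probvecs (Fen K)"
  unfolding Fen_Sent[abs_def] using Uen_cont[OF assms] Sent_cont by (intro continuous_intros) auto

lemma cont_bounded:
  fixes f :: "real^'x::finite \<Rightarrow> real"
  assumes "continuous_on probvecs f"
  shows "\<exists>B. \<forall>v\<in>probvecs. \<bar>f v\<bar> \<le> B"
proof -
  have "compact (f ` probvecs)" by (rule compact_continuous_image[OF assms probvecs_compact])
  hence "bounded (f ` probvecs)" by (rule compact_imp_bounded)
  thus ?thesis unfolding bounded_real by auto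
qed



lemma dist_sq: "(dist a b)^2 = (\<Sum>y\<in>UNIV. (a $ y - b $ y)^2)" for a b :: "real^'x::finite"
  unfolding dist_norm norm_vec_def L2_set_def by (simp add: sum_nonneg)

lemma LLN:
  fixes U :: "real^'x::finite \<Rightarrow> real"
  assumes Uc: "continuous_on probvecs U" and v: "v \<in> probvecs" and e: "e > 0"
  shows "eventually (\<lambda>N. (\<Sum>x\<in>configs N. pprod v N x * U (empirical N x)) - U v \<le> e) sequentially"
proof -
  have "uniformly_continuous_on probvecs U" by (rule compact_uniformly_continuous[OF Uc probvecs_compact])
  then obtain d where d: "d > 0" "\<forall>x\<in>probvecs. \<forall>x'\<in>probvecs. dist x' x < d \<longrightarrow> dist (U x') (U x) < e/2"
    unfolding uniformly_continuous_on_def using e by (meson half_gt_zero)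
  obtain B where B: "\<forall>w\<in>probvecs. \<bar>U w\<bar> \<le> B" using cont_bounded[OF Uc] by blast
  have B0: "B \<ge> 0" using B v by force
  define C where "C = 2 * B / d^2"
  have C0: "C \<ge> 0" unfolding C_def using B0 by simp
  have "(\<lambda>N. C * real CARD('x) / real N) \<longlonglongrightarrow> 0" by (rule lim_const_over_n)
  hence ev: "eventually (\<lambda>N. C * real CARD('x) / real N < e/2) sequentially"
    using e by (intro order_tendstoD(2)) auto
  show ?thesis using ev eventually_ge_at_top[of 1]
  proof eventually_elim
    case (elim N)
    have pt: "U (empirical N x) - U v \<le> e/2 + C * (dist (empirical N x) v)^2" for x
    proof -
      have Lp: "empirical N x \<in> probvecs" using elim by (intro empirical_probvec) auto
      show ?thesis
      proof (cases "dist (empirical N x) v < d")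
        case True
        hence "dist (U (empirical N x)) (U v) < e/2" using d Lp v by blast
        moreover have "C * (dist (empirical N x) v)^2 \<ge> 0" using C0 by simp
        ultimately show ?thesis unfolding dist_real_def using abs_ge_self[of "U (empirical N x) - U v"] by linarith
      next
        case False
        hence "d^2 \<le> (dist (empirical N x) v)^2" using d by (intro power_mono) auto
        hence "1 \<le> (dist (empirical N x) v)^2 / d^2" using d by simp
        hence "2 * B \<le> 2 * B * ((dist (empirical N x) v)^2 / d^2)" using B0
          by (metis mult_left_mono mult_1_right mult_nonneg_nonneg zero_le_numeral)
        moreover have "U (empirical N x) - U v \<le> 2 * B"
        proof -
          have "\<bar>U (empirical N x)\<bar> \<le> B" "\<bar>U v\<bar> \<le> B" using B Lp v by auto
          thus ?thesis by linarith
        qed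
        moreover have "C * (dist (empirical N x) v)^2 = 2 * B * ((dist (empirical N x) v)^2 / d^2)"
          unfolding C_def by simp
        ultimately show ?thesis using e by linarith
      qed
    qed
    have "(\<Sum>x\<in>configs N. pprod v N x * U (empirical N x)) - U v
        = (\<Sum>x\<in>configs N. pprod v N x * (U (empirical N x) - U v))"
      using p_sum[OF v, of N] by (simp add: algebra_simps sum_subtractf flip: sum_distrib_left)
    also have "\<dots> \<le> (\<Sum>x\<in>configs N. pprod v N x * (e/2 + C * (dist (empirical N x) v)^2))"
      using pt p_nonneg[OF v] by (intro sum_mono mult_left_mono) auto
    also have "\<dots> = (e/2) * (\<Sum>x\<in>configs N. pprod v N x) + C * (\<Sum>x\<in>configs N. pprod v N x * (dist (empirical N x) v)^2)"
      by (simp add: algebra_simps sum.distrib sum_distrib_left)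
    also have "\<dots> = e/2 + C * (\<Sum>y\<in>UNIV. \<Sum>x\<in>configs N. pprod v N x * (empirical N x $ y - v $ y)^2)"
      using p_sum[OF v, of N] unfolding dist_sq
      by (simp add: sum_distrib_left sum.swap[of _ UNIV])
    also have "\<dots> \<le> e/2 + C * (\<Sum>y\<in>(UNIV::'x set). 1 / real N)"
      using second_moment[OF v] elim C0 by (intro add_left_mono mult_left_mono sum_mono) auto
    also have "\<dots> = e/2 + C * real CARD('x) / real N" by simp
    also have "\<dots> \<le> e" using elim(1) by linarith
    finally show ?case .
  qed
qed



lemma lnterm: "(\<lambda>N. d * ln (real N + 1) / real N) \<longlonglongrightarrow> 0" by real_asymp

theorem proposition3p9:
  fixes K :: "real^'x::finite \<Rightarrow> 'x \<Rightarrow> real"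
    and mu :: "nat \<Rightarrow> (nat \<Rightarrow> 'x) \<Rightarrow> real"
    and M :: "(real^'x) measure"
  assumes K_C2: "\<exists>A. open A \<and> probvecs \<subseteq> A \<and> (\<forall>x. C2_on A (\<lambda>v. K v x))"
    and mu_prob: "\<forall>N\<ge>1. prob_on_configs N (mu N)"
    and M_prob: "prob_space M" and M_sets: "sets M = sets borel"
    and M_supp: "measure M probvecs = 1"
    and conv: "pushforward_weak_conv mu M"
  shows "liminf (\<lambda>N. ereal (relent N (mu N) (piN K N) / real N))
           \<ge> ereal (LINT v:probvecs|M. (Fen K v - F0 K))
       \<and> (LINT v:probvecs|M. (Fen K v - F0 K)) = FFen K M - F0 K"
proof -
  let ?P = "probvecs :: (real^'x) set"
  let ?F = "Fen K"
  have Fc: "continuous_on ?P ?F" by (rule Fen_cont[OF K_C2])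
  have Uc: "continuous_on ?P (Uen K)" by (rule Uen_cont[OF K_C2])
  obtain B where B: "\<forall>v\<in>?P. \<bar>?F v\<bar> \<le> B" using cont_bounded[OF Fc] by blast
  have Bl: "\<forall>v\<in>?P. -B \<le> ?F v" using B by (auto simp: abs_le_iff)
  have bdd: "bdd_below (?F ` ?P)" using Bl by (intro bdd_belowI2[where m="-B"]) auto
  define I where "I = (LINT v:?P|M. ?F v)"
  have Pborel: "?P \<in> sets borel" using probvecs_closed by (rule borel_closed)
  have PM: "?P \<in> sets M" using Pborel M_sets by simp
  have AEP: "AE v in M. v \<in> ?P" using prob_space.AE_prob_1[OF M_prob M_supp] .
  have fm: "finite_measure M" using M_prob by (simp add: prob_space_def)
  define f where "f = ?F \<circ> closest_point ?P"
  have cpc: "continuous_on UNIV (closest_point ?P)"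
    by (rule continuous_on_closest_point[OF probvecs_convex probvecs_closed probvecs_ne])
  have cpin: "closest_point ?P a \<in> ?P" for a by (rule closest_point_in_set[OF probvecs_closed probvecs_ne])
  have fc: "continuous_on UNIV f" unfolding f_def
    by (rule continuous_on_compose[OF cpc continuous_on_subset[OF Fc]]) (use cpin in auto)
  have fb: "bounded (range f)"
  proof -
    have "range f \<subseteq> ?F ` ?P" unfolding f_def using cpin by auto
    moreover have "bounded (?F ` ?P)"
      by (rule compact_imp_bounded[OF compact_continuous_image[OF Fc probvecs_compact]])
    ultimately show ?thesis by (rule bounded_subset[rotated])
  qed
  have lim1: "(\<lambda>N. \<Sum>x\<in>configs N. mu N x * f (empirical N x)) \<longlonglongrightarrow> integral\<^sup>L M f"
  proof -
    have "\<forall>g :: real^'x \<Rightarrow> real. continuous_on UNIV g \<and> bounded (range g) \<longrightarrow>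
        (\<lambda>N. \<Sum>x\<in>configs N. mu N x * g (empirical N x)) \<longlonglongrightarrow> integral\<^sup>L M g"
      using conv unfolding pushforward_weak_conv_def .
    from spec[OF this, of f] fc fb show ?thesis by blast
  qed
  have intf: "integral\<^sup>L M f = I"
    unfolding I_def set_lebesgue_integral_def
  proof (rule integral_cong_AE)
    show "f \<in> borel_measurable M" using borel_measurable_continuous_onI[OF fc]
      by (simp add: measurable_cong_sets[OF M_sets refl])
    show "(\<lambda>v. indicator ?P v *\<^sub>R ?F v) \<in> borel_measurable M"
      using borel_measurable_continuous_on_indicator[OF Pborel Fc]
      by (simp add: measurable_cong_sets[OF M_sets refl])
    show "AE v in M. f v = indicator ?P v *\<^sub>R ?F v"
      using AEP by eventually_elim (simp add: f_def closest_point_self)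
  qed
  have lim2: "(\<lambda>N. \<Sum>x\<in>configs N. mu N x * ?F (empirical N x)) \<longlonglongrightarrow> I"
  proof -
    have "eventually (\<lambda>N. (\<Sum>x\<in>configs N. mu N x * f (empirical N x)) = (\<Sum>x\<in>configs N. mu N x * ?F (empirical N x))) sequentially"
      using eventually_ge_at_top[of 1]
      by eventually_elim (auto simp: f_def closest_point_self empirical_probvec)
    from Lim_transform_eventually[OF lim1 this] show ?thesis unfolding intf .
  qed
  have siF: "set_integrable M ?P ?F"
    unfolding set_integrable_def
  proof (rule finite_measure.integrable_const_bound[OF fm])
    show "AE v in M. norm (indicator ?P v *\<^sub>R ?F v) \<le> B"
      using AEP by eventually_elim (use B in \<open>auto simp: indicator_def\<close>)
    show "(\<lambda>v. indicator ?P v *\<^sub>R ?F v) \<in> borel_measurable M"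
      using borel_measurable_continuous_on_indicator[OF Pborel Fc]
      by (simp add: measurable_cong_sets[OF M_sets refl])
  qed
  have siC: "set_integrable M ?P (\<lambda>_. F0 K)"
    unfolding set_integrable_def
  proof (rule finite_measure.integrable_const_bound[OF fm, where B="\<bar>F0 K\<bar>"])
    show "AE v in M. norm (indicator ?P v *\<^sub>R F0 K) \<le> \<bar>F0 K\<bar>"
      by (auto simp: indicator_def)
    show "(\<lambda>v. indicator ?P v *\<^sub>R F0 K) \<in> borel_measurable M"
      using borel_measurable_continuous_on_indicator[OF Pborel continuous_on_const[of ?P "F0 K"]]
      by (simp add: measurable_cong_sets[OF M_sets refl])
  qed
  have conj2: "(LINT v:?P|M. (?F v - F0 K)) = FFen K M - F0 K"
  proof -
    have "(LINT v:?P|M. (?F v - F0 K)) = I - (LINT v:?P|M. F0 K)"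
      unfolding I_def by (rule set_integral_diff(2)[OF siF siC])
    also have "(LINT v:?P|M. F0 K) = F0 K"
    proof -
      have "emeasure M ?P \<noteq> \<infinity>" using finite_measure.emeasure_finite[OF fm, of ?P] by simp
      thus ?thesis using set_integral_const[OF PM, of "F0 K"] M_supp by simp
    qed
    finally show ?thesis unfolding FFen_def I_def .
  qed
  have "ereal (I - F0 K) \<le> liminf (\<lambda>N. ereal (relent N (mu N) (piN K N) / real N))"
    unfolding le_Liminf_iff
  proof (intro allI impI)
    fix y assume "y < ereal (I - F0 K)"
    then obtain r where r: "y < ereal r" "r < I - F0 K" using ereal_dense2 by force
    define e where "e = (I - F0 K - r) / 4"
    have e: "e > 0" unfolding e_def using r by simp
    have "(INF v\<in>?P. ?F v) < F0 K + e" using e unfolding F0_def by simp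
    then obtain v where v: "v \<in> ?P" "?F v < F0 K + e"
      using cINF_less_iff[OF probvecs_ne bdd] by blast
    have ev1: "eventually (\<lambda>N. (\<Sum>x\<in>configs N. mu N x * ?F (empirical N x)) > I - e) sequentially"
      using lim2 e by (intro order_tendstoD(1)) auto
    have ev2: "eventually (\<lambda>N. real CARD('x) * ln (real N + 1) / real N < e) sequentially"
      using lnterm[of "real CARD('x)"] e by (intro order_tendstoD(2)) auto
    have ev3: "eventually (\<lambda>N. (\<Sum>x\<in>configs N. pprod v N x * Uen K (empirical N x)) - Uen K v \<le> e) sequentially"
      by (rule LLN[OF Uc v(1) e])
    show "eventually (\<lambda>N. y < ereal (relent N (mu N) (piN K N) / real N)) sequentially"
      using ev1 ev2 ev3 eventually_ge_at_top[of 1]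
    proof eventually_elim
      case (elim N)
      have "relent N (mu N) (piN K N) / real N \<ge>
         (\<Sum>x\<in>configs N. mu N x * ?F (empirical N x)) - ?F v - real CARD('x) * ln (real N + 1) / real N
         - ((\<Sum>x\<in>configs N. pprod v N x * Uen K (empirical N x)) - Uen K v)"
        using main_ineq[of N "mu N" v K] elim mu_prob v by auto
      moreover have "I - F0 K - r = 4 * e" unfolding e_def by simp
      ultimately have "relent N (mu N) (piN K N) / real N > r" using elim v by linarith
      hence "ereal r < ereal (relent N (mu N) (piN K N) / real N)" by simp
      thus ?case using r(1) by (rule less_trans[rotated])
    qed
  qed
  moreover have "I - F0 K = (LINT v:?P|M. (?F v - F0 K))" using conj2 by (simp add: FFen_def I_def)
  ultimately show ?thesis using conj2 by simp
qed


end
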